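(* Let $\Lambda\in\mathcal{M}_2$. (1) If $\Lambda$ is left-invertible, i.e. there exists $\xi\in\mathcal{M}_2$ with $(\xi*\Lambda)(\mathbf{w})=\min\{w_1,w_2\}$ for all $\mathbf{w}=(w_1,w_2)\in\mathbb{R}_+^2$, then $\Lambda(\mathbf{w})=\min\{w_1,w_2\}$ for all $\mathbf{w}$. (2) If $\partial_1\Lambda(w_1,w_2)\in\{0,1\}$ for almost all $w_2\in\mathbb{R}_+$, then there is $\alpha\in[0,1]$ with $\Lambda(w_1,w_2)=\min\{w_1,\alpha w_2\}$ for all $(w_1,w_2)\in\mathbb{R}_+^2$.
   Context: $\mathcal{M}_2$ is the set of bivariate tail dependence functions $\Lambda(\mathbf{w})=\lim_{s\searrow0}C(s\mathbf{w})/s$, $\mathbf{w}\in\mathbb{R}_+^2$ ($\mathbb{R}_+=[0,\infty)$), of $2$-copulas $C$; $\min\{w_1,w_2\}$ is the tail dependence function of the upper Fréchet–Hoeffding bound. The Markov product is $(\Lambda_1*\Lambda_2)(w_1,w_2):=\int_0^\infty\partial_2\Lambda_1(w_1,t)\,\partial_1\Lambda_2(t,w_2)\,dt$. *)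

theory Defs
  imports "HOL-Analysis.Analysis"
begin

text \<open>Bivariate copulas on the unit square (only values on [0,1]^2 matter).\<close>
definition is_copula :: "(real \<Rightarrow> real \<Rightarrow> real) \<Rightarrow> bool" where
  "is_copula C \<longleftrightarrow>
     (\<forall>u\<in>{0..1}. C u 0 = 0 \<and> C 0 u = 0 \<and> C u 1 = u \<and> C 1 u = u) \<and>
     (\<forall>u1 u2 v1 v2. 0 \<le> u1 \<and> u1 \<le> u2 \<and> u2 \<le> 1 \<and> 0 \<le> v1 \<and> v1 \<le> v2 \<and> v2 \<le> 1 \<longrightarrow>
        C u2 v2 - C u2 v1 - C u1 v2 + C u1 v1 \<ge> 0)"

text \<open>Membership in M_2: L is the tail dependence function of some 2-copula C,
  i.e. L(w) = lim_{s -> 0+} C(s w)/s for all w in R_+^2.\<close>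
definition is_tdf :: "(real \<Rightarrow> real \<Rightarrow> real) \<Rightarrow> bool" where
  "is_tdf L \<longleftrightarrow> (\<exists>C. is_copula C \<and>
     (\<forall>w1 w2. 0 \<le> w1 \<longrightarrow> 0 \<le> w2 \<longrightarrow>
        ((\<lambda>s. C (s * w1) (s * w2) / s) \<longlongrightarrow> L w1 w2) (at_right 0)))"

text \<open>Partial derivatives (where they exist; value 0 elsewhere, a null set).\<close>
definition pd1 :: "(real \<Rightarrow> real \<Rightarrow> real) \<Rightarrow> real \<Rightarrow> real \<Rightarrow> real" where
  "pd1 L x y = (if (\<lambda>s. L s y) differentiable (at x) then deriv (\<lambda>s. L s y) x else 0)"

definition pd2 :: "(real \<Rightarrow> real \<Rightarrow> real) \<Rightarrow> real \<Rightarrow> real \<Rightarrow> real" where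
  "pd2 L x y = (if (\<lambda>s. L x s) differentiable (at y) then deriv (\<lambda>s. L x s) y else 0)"

definition markov_prod ::
  "(real \<Rightarrow> real \<Rightarrow> real) \<Rightarrow> (real \<Rightarrow> real \<Rightarrow> real) \<Rightarrow> real \<Rightarrow> real \<Rightarrow> real" where
  "markov_prod L1 L2 w1 w2 = (LINT t:{0..}|lborel. pd2 L1 w1 t * pd1 L2 t w2)"

end

theory Submission
  imports Defs
begin


lemma cop_facts:
  assumes "is_copula C"
  shows cop_nonneg: "\<And>u v. 0 \<le> u \<Longrightarrow> u \<le> 1 \<Longrightarrow> 0 \<le> v \<Longrightarrow> v \<le> 1 \<Longrightarrow> 0 \<le> C u v"
    and cop_le1: "\<And>u v. 0 \<le> u \<Longrightarrow> u \<le> 1 \<Longrightarrow> 0 \<le> v \<Longrightarrow> v \<le> 1 \<Longrightarrow> C u v \<le> u"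
    and cop_le2: "\<And>u v. 0 \<le> u \<Longrightarrow> u \<le> 1 \<Longrightarrow> 0 \<le> v \<Longrightarrow> v \<le> 1 \<Longrightarrow> C u v \<le> v"
    and cop_mono1: "\<And>u1 u2 v. 0 \<le> u1 \<Longrightarrow> u1 \<le> u2 \<Longrightarrow> u2 \<le> 1 \<Longrightarrow> 0 \<le> v \<Longrightarrow> v \<le> 1 \<Longrightarrow> C u1 v \<le> C u2 v"
    and cop_lip1: "\<And>u1 u2 v. 0 \<le> u1 \<Longrightarrow> u1 \<le> u2 \<Longrightarrow> u2 \<le> 1 \<Longrightarrow> 0 \<le> v \<Longrightarrow> v \<le> 1 \<Longrightarrow> C u2 v - C u1 v \<le> u2 - u1"
    and cop_mono2: "\<And>u v1 v2. 0 \<le> v1 \<Longrightarrow> v1 \<le> v2 \<Longrightarrow> v2 \<le> 1 \<Longrightarrow> 0 \<le> u \<Longrightarrow> u \<le> 1 \<Longrightarrow> C u v1 \<le> C u v2"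
    and cop_lip2: "\<And>u v1 v2. 0 \<le> v1 \<Longrightarrow> v1 \<le> v2 \<Longrightarrow> v2 \<le> 1 \<Longrightarrow> 0 \<le> u \<Longrightarrow> u \<le> 1 \<Longrightarrow> C u v2 - C u v1 \<le> v2 - v1"
    and cop_rect: "\<And>u1 u2 v1 v2. 0 \<le> u1 \<Longrightarrow> u1 \<le> u2 \<Longrightarrow> u2 \<le> 1 \<Longrightarrow> 0 \<le> v1 \<Longrightarrow> v1 \<le> v2 \<Longrightarrow> v2 \<le> 1 \<Longrightarrow>
        C u2 v2 - C u2 v1 - C u1 v2 + C u1 v1 \<ge> 0"
proof -
  have b: "\<forall>u\<in>{0..1}. C u 0 = 0 \<and> C 0 u = 0 \<and> C u 1 = u \<and> C 1 u = u"
   and r: "\<And>u1 u2 v1 v2. 0 \<le> u1 \<Longrightarrow> u1 \<le> u2 \<Longrightarrow> u2 \<le> 1 \<Longrightarrow> 0 \<le> v1 \<Longrightarrow> v1 \<le> v2 \<Longrightarrow> v2 \<le> 1 \<Longrightarrow>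
        C u2 v2 - C u2 v1 - C u1 v2 + C u1 v1 \<ge> 0"
    using assms unfolding is_copula_def by blast+
  show "\<And>u1 u2 v1 v2. 0 \<le> u1 \<Longrightarrow> u1 \<le> u2 \<Longrightarrow> u2 \<le> 1 \<Longrightarrow> 0 \<le> v1 \<Longrightarrow> v1 \<le> v2 \<Longrightarrow> v2 \<le> 1 \<Longrightarrow>
        C u2 v2 - C u2 v1 - C u1 v2 + C u1 v1 \<ge> 0" by (rule r)
  show m1: "\<And>u1 u2 v. 0 \<le> u1 \<Longrightarrow> u1 \<le> u2 \<Longrightarrow> u2 \<le> 1 \<Longrightarrow> 0 \<le> v \<Longrightarrow> v \<le> 1 \<Longrightarrow> C u1 v \<le> C u2 v"
  proof -
    fix u1 u2 v :: real assume h: "0 \<le> u1" "u1 \<le> u2" "u2 \<le> 1" "0 \<le> v" "v \<le> 1"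
    from r[OF h(1,2,3) order_refl h(4) h(5)] b h show "C u1 v \<le> C u2 v" by auto
  qed
  show l1: "\<And>u1 u2 v. 0 \<le> u1 \<Longrightarrow> u1 \<le> u2 \<Longrightarrow> u2 \<le> 1 \<Longrightarrow> 0 \<le> v \<Longrightarrow> v \<le> 1 \<Longrightarrow> C u2 v - C u1 v \<le> u2 - u1"
  proof -
    fix u1 u2 v :: real assume h: "0 \<le> u1" "u1 \<le> u2" "u2 \<le> 1" "0 \<le> v" "v \<le> 1"
    from r[OF h(1,2,3) h(4) h(5) order_refl] b h show "C u2 v - C u1 v \<le> u2 - u1" by auto
  qed
  show m2: "\<And>u v1 v2. 0 \<le> v1 \<Longrightarrow> v1 \<le> v2 \<Longrightarrow> v2 \<le> 1 \<Longrightarrow> 0 \<le> u \<Longrightarrow> u \<le> 1 \<Longrightarrow> C u v1 \<le> C u v2"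
  proof -
    fix u v1 v2 :: real assume h: "0 \<le> v1" "v1 \<le> v2" "v2 \<le> 1" "0 \<le> u" "u \<le> 1"
    from r[OF order_refl h(4) h(5) h(1,2,3)] b h show "C u v1 \<le> C u v2" by auto
  qed
  show l2: "\<And>u v1 v2. 0 \<le> v1 \<Longrightarrow> v1 \<le> v2 \<Longrightarrow> v2 \<le> 1 \<Longrightarrow> 0 \<le> u \<Longrightarrow> u \<le> 1 \<Longrightarrow> C u v2 - C u v1 \<le> v2 - v1"
  proof -
    fix u v1 v2 :: real assume h: "0 \<le> v1" "v1 \<le> v2" "v2 \<le> 1" "0 \<le> u" "u \<le> 1"
    from r[OF h(4) h(5) order_refl h(1,2,3)] b h show "C u v2 - C u v1 \<le> v2 - v1" by auto
  qed
  show "\<And>u v. 0 \<le> u \<Longrightarrow> u \<le> 1 \<Longrightarrow> 0 \<le> v \<Longrightarrow> v \<le> 1 \<Longrightarrow> 0 \<le> C u v"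
    using m1[of 0] b by fastforce
  show "\<And>u v. 0 \<le> u \<Longrightarrow> u \<le> 1 \<Longrightarrow> 0 \<le> v \<Longrightarrow> v \<le> 1 \<Longrightarrow> C u v \<le> u"
    using l1[of 0] b by fastforce
  show "\<And>u v. 0 \<le> u \<Longrightarrow> u \<le> 1 \<Longrightarrow> 0 \<le> v \<Longrightarrow> v \<le> 1 \<Longrightarrow> C u v \<le> v"
    using l2[of 0] b by fastforce
qed

lemma ev_small:
  fixes x y :: real
  assumes "0 \<le> x" "0 \<le> y"
  shows "eventually (\<lambda>s. 0 < s \<and> s * x \<le> 1 \<and> s * y \<le> 1) (at_right 0)"
proof -
  have "\<exists>b>0. \<forall>s>0. s < b \<longrightarrow> 0 < s \<and> s * x \<le> 1 \<and> s * y \<le> 1"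
  proof (intro exI[of _ "1/(1+x+y)"] conjI allI impI)
    show "0 < 1/(1+x+y)" using assms by simp
    fix s :: real assume s: "0 < s" "s < 1/(1+x+y)"
    then have "s * (1+x+y) < 1" using assms by (simp add: field_simps)
    moreover have "0 \<le> s * x" "0 \<le> s * y" using s assms by auto
    ultimately show "0 < s" "s * x \<le> 1" "s * y \<le> 1" using s by (auto simp: algebra_simps)
  qed
  then show ?thesis by (simp add: eventually_at_right_field)
qed

lemma tdf_facts:
  assumes "is_tdf L"
  shows tdf_nonneg: "\<And>x y. 0 \<le> x \<Longrightarrow> 0 \<le> y \<Longrightarrow> 0 \<le> L x y"
    and tdf_le1: "\<And>x y. 0 \<le> x \<Longrightarrow> 0 \<le> y \<Longrightarrow> L x y \<le> x"
    and tdf_le2: "\<And>x y. 0 \<le> x \<Longrightarrow> 0 \<le> y \<Longrightarrow> L x y \<le> y"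
    and tdf_mono1: "\<And>x1 x2 y. 0 \<le> x1 \<Longrightarrow> x1 \<le> x2 \<Longrightarrow> 0 \<le> y \<Longrightarrow> L x1 y \<le> L x2 y"
    and tdf_lip1: "\<And>x1 x2 y. 0 \<le> x1 \<Longrightarrow> x1 \<le> x2 \<Longrightarrow> 0 \<le> y \<Longrightarrow> L x2 y - L x1 y \<le> x2 - x1"
    and tdf_mono2: "\<And>x y1 y2. 0 \<le> y1 \<Longrightarrow> y1 \<le> y2 \<Longrightarrow> 0 \<le> x \<Longrightarrow> L x y1 \<le> L x y2"
    and tdf_lip2: "\<And>x y1 y2. 0 \<le> y1 \<Longrightarrow> y1 \<le> y2 \<Longrightarrow> 0 \<le> x \<Longrightarrow> L x y2 - L x y1 \<le> y2 - y1"
    and tdf_rect: "\<And>x1 x2 y1 y2. 0 \<le> x1 \<Longrightarrow> x1 \<le> x2 \<Longrightarrow> 0 \<le> y1 \<Longrightarrow> y1 \<le> y2 \<Longrightarrow>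
        L x2 y2 - L x2 y1 - L x1 y2 + L x1 y1 \<ge> 0"
    and tdf_hom: "\<And>k x y. 0 < k \<Longrightarrow> 0 \<le> x \<Longrightarrow> 0 \<le> y \<Longrightarrow> L (k*x) (k*y) = k * L x y"
proof -
  obtain C where cop: "is_copula C" and lim: "\<And>w1 w2. 0 \<le> w1 \<Longrightarrow> 0 \<le> w2 \<Longrightarrow>
        ((\<lambda>s. C (s * w1) (s * w2) / s) \<longlongrightarrow> L w1 w2) (at_right 0)"
    using assms unfolding is_tdf_def by blast
  have nb: "at_right (0::real) \<noteq> bot" by simp
  show "\<And>x y. 0 \<le> x \<Longrightarrow> 0 \<le> y \<Longrightarrow> 0 \<le> L x y"
  proof -
    fix x y :: real assume h: "0 \<le> x" "0 \<le> y"
    show "0 \<le> L x y"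
    proof (rule tendsto_lowerbound[OF lim[OF h] _ nb])
      show "\<forall>\<^sub>F s in at_right 0. 0 \<le> C (s * x) (s * y) / s"
        using ev_small[OF h] by eventually_elim (use h cop_nonneg[OF cop] in auto)
    qed
  qed
  show "\<And>x y. 0 \<le> x \<Longrightarrow> 0 \<le> y \<Longrightarrow> L x y \<le> x"
  proof -
    fix x y :: real assume h: "0 \<le> x" "0 \<le> y"
    show "L x y \<le> x"
    proof (rule tendsto_upperbound[OF lim[OF h] _ nb])
      show "\<forall>\<^sub>F s in at_right 0. C (s * x) (s * y) / s \<le> x"
        using ev_small[OF h] by eventually_elim (use h cop_le1[OF cop] in \<open>auto simp: divide_le_eq mult.commute\<close>)
    qed
  qed
  show "\<And>x y. 0 \<le> x \<Longrightarrow> 0 \<le> y \<Longrightarrow> L x y \<le> y"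
  proof -
    fix x y :: real assume h: "0 \<le> x" "0 \<le> y"
    show "L x y \<le> y"
    proof (rule tendsto_upperbound[OF lim[OF h] _ nb])
      show "\<forall>\<^sub>F s in at_right 0. C (s * x) (s * y) / s \<le> y"
        using ev_small[OF h] by eventually_elim (use h cop_le2[OF cop] in \<open>auto simp: divide_le_eq mult.commute\<close>)
    qed
  qed
  show "\<And>x1 x2 y. 0 \<le> x1 \<Longrightarrow> x1 \<le> x2 \<Longrightarrow> 0 \<le> y \<Longrightarrow> L x1 y \<le> L x2 y"
  proof -
    fix x1 x2 y :: real assume h: "0 \<le> x1" "x1 \<le> x2" "0 \<le> y"
    have h2: "0 \<le> x2" using h by linarith
    show "L x1 y \<le> L x2 y"
    proof (rule tendsto_le[OF nb lim[OF h2 h(3)] lim[OF h(1) h(3)]])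
      show "\<forall>\<^sub>F s in at_right 0. C (s * x1) (s * y) / s \<le> C (s * x2) (s * y) / s"
        using ev_small[OF h2 h(3)] proof eventually_elim
        case (elim s)
        then have "C (s * x1) (s * y) \<le> C (s * x2) (s * y)"
          using h by (intro cop_mono1[OF cop]) (auto intro: mult_left_mono)
        then show ?case using elim by (simp add: divide_right_mono)
      qed
    qed
  qed
  show "\<And>x1 x2 y. 0 \<le> x1 \<Longrightarrow> x1 \<le> x2 \<Longrightarrow> 0 \<le> y \<Longrightarrow> L x2 y - L x1 y \<le> x2 - x1"
  proof -
    fix x1 x2 y :: real assume h: "0 \<le> x1" "x1 \<le> x2" "0 \<le> y"
    have h2: "0 \<le> x2" using h by linarith
    show "L x2 y - L x1 y \<le> x2 - x1"
    proof (rule tendsto_upperbound[OF tendsto_diff[OF lim[OF h2 h(3)] lim[OF h(1) h(3)]] _ nb])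
      show "\<forall>\<^sub>F s in at_right 0. C (s * x2) (s * y) / s - C (s * x1) (s * y) / s \<le> x2 - x1"
        using ev_small[OF h2 h(3)] proof eventually_elim
        case (elim s)
        then have "C (s * x2) (s * y) - C (s * x1) (s * y) \<le> s * x2 - s * x1"
          using h by (intro cop_lip1[OF cop]) (auto intro: mult_left_mono)
        then have "(C (s * x2) (s * y) - C (s * x1) (s * y)) / s \<le> (s * x2 - s * x1) / s"
          using elim by (simp add: divide_right_mono)
        then show ?case using elim by (simp add: diff_divide_distrib right_diff_distrib[symmetric])
      qed
    qed
  qed
  show "\<And>x y1 y2. 0 \<le> y1 \<Longrightarrow> y1 \<le> y2 \<Longrightarrow> 0 \<le> x \<Longrightarrow> L x y1 \<le> L x y2"
  proof -
    fix x y1 y2 :: real assume h: "0 \<le> y1" "y1 \<le> y2" "0 \<le> x"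
    have h2: "0 \<le> y2" using h by linarith
    show "L x y1 \<le> L x y2"
    proof (rule tendsto_le[OF nb lim[OF h(3) h2] lim[OF h(3) h(1)]])
      show "\<forall>\<^sub>F s in at_right 0. C (s * x) (s * y1) / s \<le> C (s * x) (s * y2) / s"
        using ev_small[OF h(3) h2] proof eventually_elim
        case (elim s)
        then have "C (s * x) (s * y1) \<le> C (s * x) (s * y2)"
          using h by (intro cop_mono2[OF cop]) (auto intro: mult_left_mono)
        then show ?case using elim by (simp add: divide_right_mono)
      qed
    qed
  qed
  show "\<And>x y1 y2. 0 \<le> y1 \<Longrightarrow> y1 \<le> y2 \<Longrightarrow> 0 \<le> x \<Longrightarrow> L x y2 - L x y1 \<le> y2 - y1"
  proof -
    fix x y1 y2 :: real assume h: "0 \<le> y1" "y1 \<le> y2" "0 \<le> x"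
    have h2: "0 \<le> y2" using h by linarith
    show "L x y2 - L x y1 \<le> y2 - y1"
    proof (rule tendsto_upperbound[OF tendsto_diff[OF lim[OF h(3) h2] lim[OF h(3) h(1)]] _ nb])
      show "\<forall>\<^sub>F s in at_right 0. C (s * x) (s * y2) / s - C (s * x) (s * y1) / s \<le> y2 - y1"
        using ev_small[OF h(3) h2] proof eventually_elim
        case (elim s)
        then have "C (s * x) (s * y2) - C (s * x) (s * y1) \<le> s * y2 - s * y1"
          using h by (intro cop_lip2[OF cop]) (auto intro: mult_left_mono)
        then have "(C (s * x) (s * y2) - C (s * x) (s * y1)) / s \<le> (s * y2 - s * y1) / s"
          using elim by (simp add: divide_right_mono)
        then show ?case using elim by (simp add: diff_divide_distrib right_diff_distrib[symmetric])
      qed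
    qed
  qed
  show "\<And>x1 x2 y1 y2. 0 \<le> x1 \<Longrightarrow> x1 \<le> x2 \<Longrightarrow> 0 \<le> y1 \<Longrightarrow> y1 \<le> y2 \<Longrightarrow>
        L x2 y2 - L x2 y1 - L x1 y2 + L x1 y1 \<ge> 0"
  proof -
    fix x1 x2 y1 y2 :: real assume h: "0 \<le> x1" "x1 \<le> x2" "0 \<le> y1" "y1 \<le> y2"
    have h2: "0 \<le> x2" "0 \<le> y2" using h by linarith+
    have t: "((\<lambda>s. C (s * x2) (s * y2) / s - C (s * x2) (s * y1) / s - C (s * x1) (s * y2) / s + C (s * x1) (s * y1) / s)
       \<longlongrightarrow> L x2 y2 - L x2 y1 - L x1 y2 + L x1 y1) (at_right 0)"
      by (intro tendsto_intros lim h h2)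
    show "L x2 y2 - L x2 y1 - L x1 y2 + L x1 y1 \<ge> 0"
    proof (rule tendsto_lowerbound[OF t _ nb])
      show "\<forall>\<^sub>F s in at_right 0. 0 \<le> C (s * x2) (s * y2) / s - C (s * x2) (s * y1) / s - C (s * x1) (s * y2) / s + C (s * x1) (s * y1) / s"
        using ev_small[OF h2] proof eventually_elim
        case (elim s)
        have "s * x1 \<le> s * x2" "s * y1 \<le> s * y2" using elim h by (auto intro: mult_left_mono)
        then have "0 \<le> C (s * x2) (s * y2) - C (s * x2) (s * y1) - C (s * x1) (s * y2) + C (s * x1) (s * y1)"
          using h elim by (intro cop_rect[OF cop]) auto
        then have "0 \<le> (C (s * x2) (s * y2) - C (s * x2) (s * y1) - C (s * x1) (s * y2) + C (s * x1) (s * y1)) / s"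
          using elim by simp
        then show ?case by (simp add: add_divide_distrib diff_divide_distrib)
      qed
    qed
  qed
  show "\<And>k x y. 0 < k \<Longrightarrow> 0 \<le> x \<Longrightarrow> 0 \<le> y \<Longrightarrow> L (k*x) (k*y) = k * L x y"
  proof -
    fix k x y :: real assume h: "0 < k" "0 \<le> x" "0 \<le> y"
    have f: "filterlim (\<lambda>s. s * k) (at_right 0) (at_right (0::real))"
    proof (rule tendsto_imp_filterlim_at_right)
      show "((\<lambda>s. s * k) \<longlongrightarrow> 0) (at_right 0)"
        by (rule tendsto_eq_intros) (auto intro: tendsto_intros)
      show "\<forall>\<^sub>F s in at_right 0. 0 < s * k"
        using h by (auto simp: eventually_at_right_field intro: exI[of _ 1])
    qed
    have t1: "((\<lambda>s. k * (C ((s * k) * x) ((s * k) * y) / (s * k))) \<longlongrightarrow> k * L x y) (at_right 0)"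
      by (intro tendsto_mult tendsto_const filterlim_compose[OF lim[OF h(2,3)] f, unfolded o_def])
    have e: "(\<lambda>s. k * (C ((s * k) * x) ((s * k) * y) / (s * k))) = (\<lambda>s. C (s * (k * x)) (s * (k * y)) / s)"
      using h by (auto simp: fun_eq_iff mult.assoc)
    have t2: "((\<lambda>s. C (s * (k * x)) (s * (k * y)) / s) \<longlongrightarrow> L (k*x) (k*y)) (at_right 0)"
      using h by (intro lim) auto
    show "L (k*x) (k*y) = k * L x y"
      using tendsto_unique[OF nb t2 t1[unfolded e]] .
  qed
qed



lemma tdf_scale:
  assumes "is_tdf L" "0 \<le> a" "0 \<le> h" "1 \<le> l"
  shows "L (l*a + l*h) 1 - L (l*a) 1 \<le> l * (L (a+h) 1 - L a 1)"
proof -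
  have l0: "0 < l" using assms by linarith
  have r: "L (a+h) 1 - L (a+h) (1/l) - L a 1 + L a (1/l) \<ge> 0"
    using assms by (intro tdf_rect[OF assms(1)]) (auto simp: field_simps)
  have e1: "L (l*(a+h)) (l*(1/l)) = l * L (a+h) (1/l)"
    using assms l0 by (intro tdf_hom[OF assms(1)]) auto
  have e2: "L (l*a) (l*(1/l)) = l * L a (1/l)"
    using assms l0 by (intro tdf_hom[OF assms(1)]) auto
  have "l * (L (a+h) 1 - L a 1) - (L (l*a + l*h) 1 - L (l*a) 1)
      = l * (L (a+h) 1 - L (a+h) (1/l) - L a 1 + L a (1/l))"
    using e1 e2 l0 by (simp add: algebra_simps)
  also have "\<dots> \<ge> 0" using r l0 by simp
  finally show ?thesis by simp
qed

definition sig :: "(real \<Rightarrow> real) \<Rightarrow> real \<Rightarrow> real \<Rightarrow> real" where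
  "sig g t r = (g (t + r * t) - g t) / (r * t)"

lemma sig_lim:
  assumes "(g has_real_derivative D) (at t)" "0 < t"
  shows "((\<lambda>r. sig g t r) \<longlongrightarrow> D) (at_right 0)"
proof -
  have d: "((\<lambda>h. (g (t + h) - g t) / h) \<longlongrightarrow> D) (at 0)"
    using assms(1) by (simp add: DERIV_def)
  have f: "filterlim (\<lambda>r. r * t) (at 0) (at_right (0::real))"
  proof (rule filterlim_atI)
    show "((\<lambda>r. r * t) \<longlongrightarrow> 0) (at_right 0)"
      by (rule tendsto_eq_intros) (auto intro: tendsto_intros)
    show "\<forall>\<^sub>F r in at_right 0. r * t \<noteq> 0"
      using assms by (auto simp: eventually_at_right_field intro: exI[of _ 1])
  qed
  have "((\<lambda>r. (g (t + r * t) - g t) / (r * t)) \<longlongrightarrow> D) (at_right 0)"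
    using filterlim_compose[OF d f] by (simp only: o_def)
  then show ?thesis unfolding sig_def .
qed

lemma deriv_lower:
  assumes L: "is_tdf L" and t: "0 < t" and D: "((\<lambda>x. L x 1) has_real_derivative D) (at t)"
  shows "D * t \<le> L t 1"
proof -
  define g where "g x = L x 1" for x
  have gg: "g = (\<lambda>x. L x 1)" by (rule ext) (simp add: g_def)
  have Dg: "(g has_real_derivative D) (at t)" using D by (simp add: gg)
  have key: "sig g t r * t \<le> g t" if r: "0 < r" for r
  proof -
    define z where "z n = t / (1 + r) ^ n" for n
    have zpos: "0 < z n" for n using t r by (simp add: z_def)
    have zsuc: "z n = z (Suc n) * (1 + r)" for n
    proof -
      have p: "0 < (1 + r) ^ n" using r by simp
      have "z (Suc n) * (1 + r) = t / ((1 + r) ^ n * (1 + r)) * (1 + r)" by (simp add: z_def mult.commute)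
      also have "\<dots> = t / (1 + r) ^ n"
      proof -
        have gen: "\<And>P q::real. P \<noteq> 0 \<Longrightarrow> q \<noteq> 0 \<Longrightarrow> t / (P * q) * q = t / P" by (simp add: field_simps)
        show ?thesis using p r by (intro gen) auto
      qed
      finally show ?thesis by (simp add: z_def)
    qed
    have step: "sig g t r * (z n - z (Suc n)) \<le> g (z n) - g (z (Suc n))" for n
    proof -
      define l where "l = (1 + r) ^ Suc n"
      have l1: "1 \<le> l" using r unfolding l_def by (intro one_le_power) simp
      have la: "l * z (Suc n) = t" using r by (simp add: l_def z_def del: power_Suc)
      have sc: "g (l * z (Suc n) + l * (r * z (Suc n))) - g (l * z (Suc n)) \<le> l * (g (z (Suc n) + r * z (Suc n)) - g (z (Suc n)))"
        unfolding g_def using tdf_scale[OF L, of "z (Suc n)" "r * z (Suc n)" l] zpos[of "Suc n"] r l1 by simp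
      have e1: "l * z (Suc n) + l * (r * z (Suc n)) = t + r * t" using la by (simp add: algebra_simps)
      have e2: "z (Suc n) + r * z (Suc n) = z n" using zsuc[of n] by (simp add: algebra_simps)
      have ss: "sig g t r * (r * t) = g (t + r * t) - g t" using t r by (simp add: sig_def)
      have "sig g t r * (r * t) \<le> l * (g (z n) - g (z (Suc n)))"
        unfolding ss using sc[unfolded e1, unfolded e2 la] .
      moreover have "r * t = l * (z n - z (Suc n))"
      proof -
        have "l * (z n - z (Suc n)) = r * (l * z (Suc n))" by (simp add: e2[symmetric] algebra_simps)
        then show ?thesis using la by simp
      qed
      ultimately have "l * (sig g t r * (z n - z (Suc n))) \<le> l * (g (z n) - g (z (Suc n)))"
        by (simp add: algebra_simps)
      then show ?thesis using l1 by simp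
    qed
    have tele: "sig g t r * (t - z n) \<le> g t - g (z n)" for n
    proof (induction n)
      case 0 then show ?case by (simp add: z_def)
    next
      case (Suc n) then show ?case using step[of n] by (simp add: algebra_simps)
    qed
    have gz: "0 \<le> g (z n)" for n unfolding g_def using zpos[of n] by (intro tdf_nonneg[OF L]) auto
    have zl: "z \<longlonglongrightarrow> 0"
    proof -
      have "(\<lambda>n. t * (1 / (1 + r)) ^ n) \<longlonglongrightarrow> t * 0"
        using r by (intro tendsto_intros) auto
      moreover have "z = (\<lambda>n. t * (1 / (1 + r)) ^ n)"
        by (simp add: fun_eq_iff z_def divide_inverse power_inverse)
      ultimately show ?thesis by simp
    qed
    have "(\<lambda>n. sig g t r * (t - z n)) \<longlonglongrightarrow> sig g t r * (t - 0)"
      by (intro tendsto_intros zl)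
    moreover have "\<forall>n. sig g t r * (t - z n) \<le> g t" using tele gz by (smt (verit))
    ultimately show ?thesis by (simp add: LIMSEQ_le_const2)
  qed
  have "((\<lambda>r. sig g t r * t) \<longlongrightarrow> D * t) (at_right 0)"
    using sig_lim[OF Dg t] by (intro tendsto_intros)
  moreover have "\<forall>\<^sub>F r in at_right 0. sig g t r * t \<le> g t"
    using key by (auto simp: eventually_at_right_field intro: exI[of _ 1])
  ultimately show ?thesis unfolding g_def[symmetric]
    by (intro tendsto_upperbound) auto
qed

lemma deriv_upper:
  assumes L: "is_tdf L" and t: "0 < t" and D: "((\<lambda>x. L x 1) has_real_derivative D) (at t)"
    and w: "t \<le> w"
  shows "L w 1 - L t 1 \<le> D * (w - t)"
proof (cases "w = t")
  case True then show ?thesis by simp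
next
  case False
  then have wt: "t < w" using w by simp
  define g where "g x = L x 1" for x
  have gg: "g = (\<lambda>x. L x 1)" by (rule ext) (simp add: g_def)
  have Dg: "(g has_real_derivative D) (at t)" using D by (simp add: gg)
  have key: "g (t * (1 + r) ^ n) - g t \<le> sig g t r * (t * (1 + r) ^ n - t)" if r: "0 < r" for r n
  proof (induction n)
    case 0 then show ?case by simp
  next
    case (Suc n)
    define l where "l = (1 + r) ^ n"
    have l1: "1 \<le> l" using r unfolding l_def by (intro one_le_power) simp
    have sc: "g (l * t + l * (r * t)) - g (l * t) \<le> l * (g (t + r * t) - g t)"
      unfolding g_def using tdf_scale[OF L, of t "r * t" l] t r l1 by simp
    have e: "l * t + l * (r * t) = t * (1 + r) ^ Suc n" by (simp add: l_def algebra_simps)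
    have "l * (g (t + r * t) - g t) = sig g t r * (t * (1 + r) ^ Suc n - t * (1 + r) ^ n)"
      using t r by (simp add: sig_def l_def field_simps)
    then show ?case using Suc sc e by (simp add: l_def algebra_simps)
  qed
  define c where "c = w / t"
  have c1: "1 < c" using wt t by (simp add: c_def)
  define rr where "rr n = root (Suc n) c - 1" for n
  have rrpos: "0 < rr n" for n using c1 by (simp add: rr_def)
  have rrpow: "t * (1 + rr n) ^ Suc n = w" for n
    using c1 t by (simp add: rr_def c_def del: power_Suc)
  have rrlim: "rr \<longlonglongrightarrow> 0"
  proof -
    have "(\<lambda>n. root (Suc n) c) \<longlonglongrightarrow> 1" using LIMSEQ_Suc[OF LIMSEQ_root_const] c1 by simp
    then have "(\<lambda>n. root (Suc n) c - 1) \<longlonglongrightarrow> 1 - 1" by (intro tendsto_intros)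
    moreover have "rr = (\<lambda>n. root (Suc n) c - 1)" by (rule ext) (simp add: rr_def)
    ultimately show ?thesis by simp
  qed
  have "filterlim rr (at_right 0) sequentially"
    using rrlim rrpos by (intro tendsto_imp_filterlim_at_right) auto
  then have sl: "(\<lambda>n. sig g t (rr n)) \<longlonglongrightarrow> D"
    by (rule filterlim_compose[OF sig_lim[OF Dg t]])
  have "(\<lambda>n. sig g t (rr n) * (w - t)) \<longlonglongrightarrow> D * (w - t)"
    by (intro tendsto_intros sl)
  moreover have "\<forall>n. g w - g t \<le> sig g t (rr n) * (w - t)"
    using key[OF rrpos, of _ "Suc _"] rrpow by metis
  ultimately show ?thesis unfolding g_def[symmetric]
    by (intro LIMSEQ_le_const) auto
qed



lemma transfer_deriv:
  assumes L: "is_tdf L" and w: "0 < w2"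
    and d: "((\<lambda>x. L x w2) has_real_derivative d) (at 1)"
  shows "((\<lambda>x. L x 1) has_real_derivative d) (at (1/w2))"
proof -
  have i: "((\<lambda>y. w2 * y) has_real_derivative w2) (at (1/w2))"
    using DERIV_cmult[OF DERIV_ident, of w2 "1/w2" UNIV] by simp
  have d': "((\<lambda>x. L x w2) has_real_derivative d) (at (w2 * (1/w2)))" using d w by simp
  have "((\<lambda>y. L (w2 * y) w2) has_real_derivative d * w2) (at (1/w2))"
    using DERIV_chain2[OF d' i] .
  then have "((\<lambda>y. L (w2 * y) w2 / w2) has_real_derivative d * w2 / w2) (at (1/w2))"
    by (rule DERIV_cdivide)
  then have *: "((\<lambda>y. L (w2 * y) w2 / w2) has_real_derivative d) (at (1/w2))"
    using w by simp
  have ev: "eventually (\<lambda>y. L (w2 * y) w2 / w2 = L y 1) (nhds (1/w2))"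
  proof -
    have "eventually (\<lambda>y. y \<in> {0<..}) (nhds (1/w2))"
      using w by (intro eventually_nhds_in_open) auto
    then show ?thesis
    proof eventually_elim
      case (elim y)
      then have "L (w2 * y) (w2 * 1) = w2 * L y 1" using w by (intro tdf_hom[OF L]) auto
      then show ?case using w by simp
    qed
  qed
  show ?thesis using * DERIV_cong_ev[OF refl ev refl] by simp
qed

lemma good_dense:
  assumes L: "is_tdf L"
    and H: "\<forall>w1>0. AE w2 in lborel. 0 \<le> w2 \<longrightarrow>
              (\<exists>d\<in>{0,1}. ((\<lambda>x. L x w2) has_real_derivative d) (at w1))"
    and xy: "0 < x" "x < y"
  shows "\<exists>u. x < u \<and> u < y \<and> (\<exists>d\<in>{0,1}. ((\<lambda>x. L x 1) has_real_derivative d) (at u))"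
proof (rule ccontr)
  assume nex: "\<not> ?thesis"
  have ae: "AE w2 in lborel. 0 \<le> w2 \<longrightarrow> (\<exists>d\<in>{0,1}. ((\<lambda>x. L x w2) has_real_derivative d) (at 1))"
    using H by auto
  have "AE w2 in lborel. w2 \<notin> {1/y<..<1/x}"
    using ae
  proof eventually_elim
    case (elim w2)
    show ?case
    proof
      assume w2: "w2 \<in> {1/y<..<1/x}"
      have yp: "0 < y" using xy by simp
      have w2p: "0 < w2" using w2 yp by (auto intro: less_trans[rotated])
      then obtain d where d: "d \<in> {0,1}" "((\<lambda>x. L x w2) has_real_derivative d) (at 1)"
        using elim by auto
      have "((\<lambda>x. L x 1) has_real_derivative d) (at (1/w2))"
        by (rule transfer_deriv[OF L w2p d(2)])
      moreover have "x < 1/w2" "1/w2 < y" using w2 w2p xy yp by (auto simp: field_simps)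
      ultimately show False using nex d(1) by blast
    qed
  qed
  then have "{1/y<..<1/x} \<in> null_sets lborel"
    by (subst AE_iff_null_sets) auto
  then have "emeasure lborel {1/y<..<1/x} = 0" by auto
  moreover have "1/y < 1/x" using xy by (simp add: frac_less2)
  ultimately show False by simp
qed


lemma part2:
  assumes L: "is_tdf L"
    and H: "\<forall>w1>0. AE w2 in lborel. 0 \<le> w2 \<longrightarrow>
              (\<exists>d\<in>{0,1}. ((\<lambda>x. L x w2) has_real_derivative d) (at w1))"
  shows "\<exists>\<alpha>\<in>{0..1}. \<forall>w1 w2. 0 \<le> w1 \<longrightarrow> 0 \<le> w2 \<longrightarrow> L w1 w2 = min w1 (\<alpha> * w2)"
proof -
  define g where "g x = L x 1" for x
  have gg: "g = (\<lambda>x. L x 1)" by (rule ext) (simp add: g_def)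
  define A where "A = {u. 0 < u \<and> (g has_real_derivative 1) (at u)}"
  have Ag: "g u = u \<and> u \<le> 1" if "u \<in> A" for u
  proof -
    have u: "0 < u" "((\<lambda>x. L x 1) has_real_derivative 1) (at u)" using that by (auto simp: A_def gg)
    have "1 * u \<le> L u 1" by (rule deriv_lower[OF L u])
    moreover have "L u 1 \<le> u" "L u 1 \<le> 1" using u by (auto intro: tdf_le1[OF L] tdf_le2[OF L])
    ultimately show ?thesis by (simp add: g_def)
  qed
  have bdd: "bdd_above A" unfolding bdd_above_def using Ag by blast
  define \<alpha> where "\<alpha> = (if A = {} then 0 else Sup A)"
  have a01: "0 \<le> \<alpha> \<and> \<alpha> \<le> 1"
  proof (cases "A = {}")
    case True then show ?thesis by (simp add: \<alpha>_def)
  next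
    case False
    then obtain u where u: "u \<in> A" by blast
    have "u \<le> Sup A" using u bdd by (rule cSup_upper)
    moreover have "0 < u" using u by (simp add: A_def)
    moreover have "Sup A \<le> 1" using False Ag by (intro cSup_least) auto
    ultimately show ?thesis using False by (simp add: \<alpha>_def)
  qed
  have gnn: "0 \<le> g x" "g x \<le> x" "g x \<le> 1" if "0 \<le> x" for x
    using that by (auto simp: g_def intro: tdf_nonneg[OF L] tdf_le1[OF L] tdf_le2[OF L])
  have gmono: "g x \<le> g y" if "0 \<le> x" "x \<le> y" for x y
    using that by (simp add: g_def tdf_mono1[OF L])
  have glip: "g y - g x \<le> y - x" if "0 \<le> x" "x \<le> y" for x y
    using that by (simp add: g_def tdf_lip1[OF L])
  have c1: "g w = w" if w: "0 \<le> w" "w \<le> \<alpha>" for w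
  proof (cases "A = {}")
    case True
    then have "w = 0" using w by (simp add: \<alpha>_def)
    then show ?thesis using gnn[of 0] by simp
  next
    case False
    show ?thesis
    proof (rule ccontr)
      assume "g w \<noteq> w"
      then have lt: "g w < w" using gnn[OF w(1)] by simp
      then have "g w < Sup A" using w False by (simp add: \<alpha>_def)
      then obtain u where u: "u \<in> A" "g w < u" using less_cSup_iff[OF False bdd] by blast
      have u0: "0 < u" "g u = u" using u Ag by (auto simp: A_def)
      show False
      proof (cases "u \<le> w")
        case True
        then show False using gmono[of u w] u u0 by simp
      next
        case False
        then show False using glip[of w u] u u0 w lt by simp
      qed
    qed
  qed
  have c2: "g w = \<alpha>" if w: "\<alpha> < w" for w
  proof -
    have ga: "g \<alpha> = \<alpha>" using c1 a01 by simp
    have ge: "\<alpha> \<le> g w" using gmono[of \<alpha> w] a01 w ga by simp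
    have le: "g w \<le> \<alpha>"
    proof (rule field_le_epsilon)
      fix e :: real assume e: "0 < e"
      define d where "d = min e (w - \<alpha>)"
      have d: "0 < d" "d \<le> e" "d \<le> w - \<alpha>" using e w by (auto simp: d_def)
      obtain u where u: "\<alpha> + d/2 < u" "u < \<alpha> + d"
        and ud: "\<exists>dd\<in>{0,1}. ((\<lambda>x. L x 1) has_real_derivative dd) (at u)"
        using good_dense[OF L H, of "\<alpha> + d/2" "\<alpha> + d"] d a01 by auto
      have u0: "0 < u" using u d a01 by linarith
      have uA: "u \<notin> A"
      proof
        assume uA: "u \<in> A"
        then have "A \<noteq> {}" by auto
        then have "u \<le> \<alpha>" using cSup_upper[OF uA bdd] by (simp add: \<alpha>_def)
        then show False using u d by linarith
      qed
      have "((\<lambda>x. L x 1) has_real_derivative 0) (at u)"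
        using ud uA u0 by (auto simp: A_def gg)
      then have "L w 1 - L u 1 \<le> 0 * (w - u)"
        using u d by (intro deriv_upper[OF L u0]) auto
      then have "g w \<le> g u" by (simp add: g_def)
      also have "g u \<le> g \<alpha> + (u - \<alpha>)" using glip[of \<alpha> u] a01 u d by linarith
      finally show "g w \<le> \<alpha> + e" using ga u d by linarith
    qed
    show ?thesis using ge le by simp
  qed
  have gmin: "g x = min x \<alpha>" if "0 \<le> x" for x
    using c1[OF that] c2 by (cases "x \<le> \<alpha>") auto
  show ?thesis
  proof (intro bexI[of _ \<alpha>] allI impI)
    show "\<alpha> \<in> {0..1}" using a01 by simp
    fix w1 w2 :: real assume w: "0 \<le> w1" "0 \<le> w2"
    show "L w1 w2 = min w1 (\<alpha> * w2)"
    proof (cases "w2 = 0")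
      case True
      then have "L w1 w2 = 0" using w tdf_nonneg[OF L w] tdf_le2[OF L w] by simp
      then show ?thesis using True w by simp
    next
      case False
      then have w2: "0 < w2" using w by simp
      have "L (w2 * (w1 / w2)) (w2 * 1) = w2 * L (w1 / w2) 1"
        using w w2 by (intro tdf_hom[OF L]) auto
      then have "L w1 w2 = w2 * g (w1 / w2)" using w2 by (simp add: g_def)
      also have "\<dots> = w2 * min (w1 / w2) \<alpha>" using gmin w w2 by simp
      also have "\<dots> = min w1 (\<alpha> * w2)" using w2
        by (cases "w1 / w2 \<le> \<alpha>") (auto simp: min_def field_simps)
      finally show ?thesis .
    qed
  qed
qed



lemma ftc_ineq:
  fixes f h :: "real \<Rightarrow> real"
  assumes cont: "continuous_on {0..} f"
    and mono: "\<And>x y. 0 \<le> x \<Longrightarrow> x \<le> y \<Longrightarrow> f x \<le> f y"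
    and int: "set_integrable lborel {0..} h"
    and st: "0 \<le> s" "s \<le> T"
    and hyp: "\<And>t. s < t \<Longrightarrow> t < T \<Longrightarrow> 0 \<le> h t \<and> (h t \<noteq> 0 \<longrightarrow> (\<exists>D. (f has_real_derivative D) (at t) \<and> h t \<le> D))"
  shows "(LINT t:{s..T}|lborel. h t) \<le> f T - f s"
proof -
  define ft where "ft t = f (max 0 t)" for t
  have ftc: "continuous_on UNIV ft"
    unfolding ft_def by (rule continuous_on_compose2[OF cont]) (auto intro!: continuous_intros)
  have fteq: "ft x = f x" if "0 \<le> x" for x using that by (simp add: ft_def)
  have ftmono: "ft x \<le> ft y" if "x \<le> y" for x y unfolding ft_def by (rule mono) (use that in auto)
  define G where "G x = integral {-1..x} ft" for x
  have G': "(G has_real_derivative ft x) (at x)" if "-1 < x" for x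
  proof -
    have "(G has_real_derivative ft x) (at x within {-1..x+1})"
      unfolding G_def[abs_def] using that
      by (intro integral_has_real_derivative continuous_on_subset[OF ftc]) auto
    moreover have "at x within {-1..x+1} = at x"
      using that by (intro at_within_interior) auto
    ultimately show ?thesis by simp
  qed
  define hn where "hn n = 1 / real (Suc n)" for n
  have hn: "0 < hn n" "hn n \<le> 1" for n by (auto simp: hn_def field_simps)
  have hnlim: "hn \<longlonglongrightarrow> 0"
    unfolding hn_def by (rule LIMSEQ_Suc[OF lim_const_over_n])
  define q where "q n t = (ft (t + hn n) - ft t) / hn n" for n t
  have qnn: "0 \<le> q n t" for n t
    unfolding q_def using hn[of n] ftmono[of t "t + hn n"] by simp
  have qcont: "continuous_on UNIV (q n)" for n
    unfolding q_def using hn[of n]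
    by (intro continuous_intros continuous_on_compose2[OF ftc]) auto
  define F where "F n x = (G (x + hn n) - G x) / hn n" for n x
  have Fd: "(F n has_real_derivative q n x) (at x)" if "0 \<le> x" for n x
  proof -
    have a: "((\<lambda>x. x + hn n) has_real_derivative 1) (at x)"
      by (auto intro!: derivative_eq_intros)
    have b: "(G has_real_derivative ft (x + hn n)) (at (x + hn n))"
      using that hn[of n] by (intro G') auto
    have "((\<lambda>x. G (x + hn n)) has_real_derivative ft (x + hn n) * 1) (at x)"
      by (rule DERIV_chain2[OF b a])
    then have "((\<lambda>x. G (x + hn n) - G x) has_real_derivative ft (x + hn n) * 1 - ft x) (at x)"
      using G'[of x] that by (intro DERIV_diff) auto
    then have "((\<lambda>x. (G (x + hn n) - G x) / hn n) has_real_derivative (ft (x + hn n) * 1 - ft x) / hn n) (at x)"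
      by (rule DERIV_cdivide)
    then show ?thesis by (simp add: F_def[abs_def] q_def)
  qed
  have qint: "integral\<^sup>L lborel (\<lambda>t. indicator {s..T} t *\<^sub>R q n t) = F n T - F n s" for n
  proof (rule integral_FTC_atLeastAtMost[OF st(2)])
    fix x assume "s \<le> x" "x \<le> T"
    then have "(F n has_real_derivative q n x) (at x within {s..T})"
      using st \<open>s \<le> x\<close> by (intro has_field_derivative_at_within[OF Fd]) auto
    then show "(F n has_vector_derivative q n x) (at x within {s..T})"
      by (rule has_real_derivative_iff_has_vector_derivative[THEN iffD1])
  next
    show "continuous_on {s..T} (q n)" using qcont by (rule continuous_on_subset) auto
  qed
  have Fbound: "F n T - F n s \<le> f (T + hn n) - f s" for n
  proof -
    have der: "\<And>x. a \<le> x \<Longrightarrow> x \<le> a + hn n \<Longrightarrow> (G has_real_derivative ft x) (at x)" if "0 \<le> a" for a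
      using that by (intro G') auto
    obtain z where z: "T < z" "z < T + hn n" "G (T + hn n) - G T = (T + hn n - T) * ft z"
      using MVT2[of T "T + hn n" G ft] der[of T] st hn[of n] by auto
    obtain z' where z': "s < z'" "z' < s + hn n" "G (s + hn n) - G s = (s + hn n - s) * ft z'"
      using MVT2[of s "s + hn n" G ft] der[of s] st hn[of n] by auto
    have "F n T - F n s = ft z - ft z'"
      using z z' hn[of n] by (simp add: F_def field_simps)
    moreover have "ft z \<le> f (T + hn n)" using z st ftmono[of z "T + hn n"] fteq[of "T + hn n"] hn[of n] by simp
    moreover have "f s \<le> ft z'" using z' st ftmono[of s z'] fteq[of s] by simp
    ultimately show ?thesis by simp
  qed
  have hint: "integrable lborel (\<lambda>t. indicator {s..T} t * h t)"
    using set_integrable_subset[OF int, of "{s..T}"] st by (simp add: set_integrable_def)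
  define u where "u n t = min (indicator {s..T} t * h t) (indicator {s..T} t * q n t)" for n t
  have qmeas: "(\<lambda>t. indicator {s..T} t * q n t) \<in> borel_measurable lborel" for n
    using borel_measurable_continuous_on_indicator[of "{s..T}" "q n"] continuous_on_subset[OF qcont]
    by simp
  have qiint: "integrable lborel (\<lambda>t. indicator {s..T} t * q n t)" for n
    using borel_integrable_atLeastAtMost'[OF continuous_on_subset[OF qcont, of "{s..T}"]]
    by (simp add: set_integrable_def)
  have lim: "AE t in lborel. (\<lambda>n. u n t) \<longlonglongrightarrow> indicator {s..T} t * h t"
    using AE_lborel_singleton[of s] AE_lborel_singleton[of T]
  proof eventually_elim
    case (elim t)
    show ?case
    proof (cases "s < t \<and> t < T")
      case False
      then have "t \<notin> {s..T}" using elim by auto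
      then show ?thesis by (simp add: u_def)
    next
      case True
      then have tin: "t \<in> {s..T}" by auto
      have h0: "0 \<le> h t" using hyp True by blast
      show ?thesis
      proof (cases "h t = 0")
        case True
        then show ?thesis using tin qnn by (simp add: u_def)
      next
        case False
        then obtain D where D: "(f has_real_derivative D) (at t)" "h t \<le> D"
          using hyp[of t] \<open>s < t \<and> t < T\<close> by blast
        have t0: "0 < t" using True st by linarith
        have ev: "eventually (\<lambda>y. ft y = f y) (nhds t)"
        proof -
          have "eventually (\<lambda>y. y \<in> {0<..}) (nhds t)"
            using t0 by (intro eventually_nhds_in_open) auto
          then show ?thesis by eventually_elim (simp add: fteq)
        qed
        have Dft: "(ft has_real_derivative D) (at t)"
          using D(1) DERIV_cong_ev[OF refl ev refl] by simp
        have dq: "((\<lambda>k. (ft (t + k) - ft t) / k) \<longlongrightarrow> D) (at 0)"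
          using Dft by (simp add: DERIV_def)
        have hf: "filterlim hn (at 0) sequentially"
        proof (rule filterlim_atI[OF hnlim])
          show "\<forall>\<^sub>F x in sequentially. hn x \<noteq> 0"
            using hn(1) by (intro always_eventually allI) (metis less_irrefl)
        qed
        have "(\<lambda>n. q n t) \<longlonglongrightarrow> D"
          using filterlim_compose[OF dq hf] by (simp add: q_def o_def)
        then have "(\<lambda>n. min (h t) (q n t)) \<longlonglongrightarrow> min (h t) D"
          by (intro tendsto_intros)
        then show ?thesis using tin D(2) by (simp add: u_def min_def)
      qed
    qed
  qed
  have bound: "AE t in lborel. norm (u n t) \<le> \<bar>indicator {s..T} t * h t\<bar>" for n
  proof (rule AE_I2)
    fix t
    show "norm (u n t) \<le> \<bar>indicator {s..T} t * h t\<bar>"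
      using qnn[of n t] by (auto simp: u_def indicator_def min_def)
  qed
  have umeas: "u n \<in> borel_measurable lborel" for n
    unfolding u_def[abs_def]
    using borel_measurable_integrable[OF hint] qmeas by measurable
  have conv: "(\<lambda>n. integral\<^sup>L lborel (u n)) \<longlonglongrightarrow> integral\<^sup>L lborel (\<lambda>t. indicator {s..T} t * h t)"
    by (rule integral_dominated_convergence[OF borel_measurable_integrable[OF hint] umeas
          integrable_abs[OF hint] lim bound])
  have uint: "integrable lborel (u n)" for n
    by (rule integrable_dominated_convergence2[OF borel_measurable_integrable[OF hint] umeas
          integrable_abs[OF hint] lim bound])
  have ule: "integral\<^sup>L lborel (u n) \<le> f (T + hn n) - f s" for n
  proof -
    have "integral\<^sup>L lborel (u n) \<le> integral\<^sup>L lborel (\<lambda>t. indicator {s..T} t * q n t)"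
      using uint qiint by (intro integral_mono) (auto simp: u_def)
    also have "\<dots> = F n T - F n s" using qint[of n] by simp
    finally show ?thesis using Fbound[of n] by simp
  qed
  have flim: "(\<lambda>n. f (T + hn n) - f s) \<longlonglongrightarrow> f T - f s"
  proof -
    have ic: "isCont ft (T + 0)" using ftc by (simp add: continuous_on_eq_continuous_at)
    have "(\<lambda>n. T + hn n) \<longlonglongrightarrow> T + 0" by (intro tendsto_intros hnlim)
    have "(\<lambda>n. ft (T + hn n)) \<longlonglongrightarrow> ft (T + 0)"
      by (rule isCont_tendsto_compose[OF ic \<open>(\<lambda>n. T + hn n) \<longlonglongrightarrow> T + 0\<close>])
    then have "(\<lambda>n. f (T + hn n)) \<longlonglongrightarrow> f T"
      using st hn by (simp add: fteq less_imp_le add_nonneg_nonneg)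
    then show ?thesis by (intro tendsto_intros)
  qed
  have "integral\<^sup>L lborel (\<lambda>t. indicator {s..T} t * h t) \<le> f T - f s"
    using conv flim ule by (intro LIMSEQ_le[OF conv flim]) auto
  then show ?thesis by (simp add: set_lebesgue_integral_def)
qed



lemma ml_facts:
  fixes f :: "real \<Rightarrow> real"
  assumes ml: "\<And>x y. 0 \<le> x \<Longrightarrow> x \<le> y \<Longrightarrow> f x \<le> f y \<and> f y - f x \<le> y - x"
  shows ml_cont: "continuous_on {0..} f"
    and ml_deriv: "\<And>t D. 0 < t \<Longrightarrow> (f has_real_derivative D) (at t) \<Longrightarrow> 0 \<le> D \<and> D \<le> 1"
proof -
  have "1-lipschitz_on {0..} f"
  proof (rule lipschitz_onI)
    fix x y :: real assume "x \<in> {0..}" "y \<in> {0..}"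
    then show "dist (f x) (f y) \<le> 1 * dist x y"
      using ml[of x y] ml[of y x] by (cases "x \<le> y") (auto simp: dist_real_def abs_if)
  qed simp
  then show "continuous_on {0..} f" by (rule lipschitz_on_continuous_on)
  fix t D :: real assume t: "0 < t" and D: "(f has_real_derivative D) (at t)"
  have q: "((\<lambda>y. (f y - f t) / (y - t)) \<longlongrightarrow> D) (at_right t)"
    using D unfolding has_field_derivative_iff by (rule tendsto_mono[OF at_le, rotated]) simp
  have ev: "eventually (\<lambda>y. 0 \<le> (f y - f t) / (y - t) \<and> (f y - f t) / (y - t) \<le> 1) (at_right t)"
  proof -
    have "eventually (\<lambda>y. t < y) (at_right t)" by (simp add: eventually_at_right_field) (auto intro: gt_ex)
    then show ?thesis
    proof eventually_elim
      case (elim y)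
      then have "f t \<le> f y" "f y - f t \<le> y - t" using ml[of t y] t by auto
      then show ?case using elim by (simp add: divide_le_eq)
    qed
  qed
  have nb: "at_right t \<noteq> bot" by simp
  have "0 \<le> D" by (rule tendsto_lowerbound[OF q _ nb]) (use ev in \<open>auto elim: eventually_mono\<close>)
  moreover have "D \<le> 1" by (rule tendsto_upperbound[OF q _ nb]) (use ev in \<open>auto elim: eventually_mono\<close>)
  ultimately show "0 \<le> D \<and> D \<le> 1" by simp
qed

lemma pd_facts:
  fixes f :: "real \<Rightarrow> real"
  assumes ml: "\<And>x y. 0 \<le> x \<Longrightarrow> x \<le> y \<Longrightarrow> f x \<le> f y \<and> f y - f x \<le> y - x"
    and t: "0 < t"
  shows "0 \<le> (if f differentiable (at t) then deriv f t else 0)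
      \<and> (if f differentiable (at t) then deriv f t else 0) \<le> 1
      \<and> ((if f differentiable (at t) then deriv f t else 0) \<noteq> 0 \<longrightarrow>
           (f has_real_derivative (if f differentiable (at t) then deriv f t else 0)) (at t))"
proof (cases "f differentiable (at t)")
  case True
  then have d: "(f has_real_derivative deriv f t) (at t)"
    by (simp add: DERIV_deriv_iff_real_differentiable)
  show ?thesis using ml_deriv[OF ml t d] d True by simp
qed simp

lemma split_int:
  fixes c :: "real \<Rightarrow> real"
  assumes int: "set_integrable lborel {0..} c" and abd: "0 \<le> a" "a \<le> b" "b \<le> d"
  shows "(LINT t:{a..d}|lborel. c t) = (LINT t:{a..b}|lborel. c t) + (LINT t:{b..d}|lborel. c t)"
proof -
  have i1: "set_integrable lborel {a..b} c" using abd by (intro set_integrable_subset[OF int]) auto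
  have i2: "set_integrable lborel {b..d} c" using abd by (intro set_integrable_subset[OF int]) auto
  have "AE x in lborel. \<not> (x \<in> {a..b} \<and> x \<in> {b..d})"
    using AE_lborel_singleton[of b] by eventually_elim auto
  then have "(LINT t:{a..b} \<union> {b..d}|lborel. c t) = (LINT t:{a..b}|lborel. c t) + (LINT t:{b..d}|lborel. c t)"
    by (intro set_integral_Un_AE i1 i2) auto
  moreover have "{a..b} \<union> {b..d} = {a..d}" using abd by auto
  ultimately show ?thesis by simp
qed

lemma int_lim:
  fixes c :: "real \<Rightarrow> real"
  assumes int: "set_integrable lborel {0..} c"
  shows "(\<lambda>n. LINT t:{0..real n}|lborel. c t) \<longlonglongrightarrow> (LINT t:{0..}|lborel. c t)"
proof -
  have I: "integrable lborel (\<lambda>t. indicator {0..} t * c t)" using int by (simp add: set_integrable_def)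
  have In: "integrable lborel (\<lambda>t. indicator {0..real n} t * c t)" for n
    using set_integrable_subset[OF int, of "{0..real n}"] by (simp add: set_integrable_def)
  have "(\<lambda>n. integral\<^sup>L lborel (\<lambda>t. indicator {0..real n} t * c t)) \<longlonglongrightarrow> integral\<^sup>L lborel (\<lambda>t. indicator {0..} t * c t)"
  proof (rule integral_dominated_convergence[OF borel_measurable_integrable[OF I] borel_measurable_integrable[OF In] integrable_abs[OF I]])
    show "AE t in lborel. (\<lambda>n. indicator {0..real n} t * c t) \<longlonglongrightarrow> indicator {0..} t * c t"
    proof (rule AE_I2)
      fix t :: real
      show "(\<lambda>n. indicator {0..real n} t * c t) \<longlonglongrightarrow> indicator {0..} t * c t"
      proof (rule tendsto_eventually)
        have "\<forall>n\<ge>nat \<lceil>t\<rceil>. indicator {0..real n} t * c t = indicator {0..} t * c t"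
        proof (intro allI impI)
          fix n assume "nat \<lceil>t\<rceil> \<le> n"
          then have "t \<le> real n" by linarith
          then show "indicator {0..real n} t * c t = indicator {0..} t * c t"
            by (auto simp: indicator_def)
        qed
        then show "\<forall>\<^sub>F n in sequentially. indicator {0..real n} t * c t = indicator {0..} t * c t"
          unfolding eventually_sequentially by blast
      qed
    qed
    show "AE t in lborel. norm (indicator {0..real n} t * c t) \<le> \<bar>indicator {0..} t * c t\<bar>" for n
      by (rule AE_I2) (auto simp: indicator_def)
  qed
  then show ?thesis by (simp add: set_lebesgue_integral_def)
qed


lemma part1:
  assumes L: "is_tdf L" and X: "is_tdf \<xi>"
    and M: "\<forall>w1 w2. 0 \<le> w1 \<longrightarrow> 0 \<le> w2 \<longrightarrow> markov_prod \<xi> L w1 w2 = min w1 w2"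
  shows "\<forall>w1 w2. 0 \<le> w1 \<longrightarrow> 0 \<le> w2 \<longrightarrow> L w1 w2 = min w1 w2"
proof -
  define g where "g = (\<lambda>x. L x 1)"
  define \<psi> where "\<psi> = (\<lambda>x. \<xi> 1 x)"
  define a where "a t = pd2 \<xi> 1 t" for t
  define b where "b t = pd1 L t 1" for t
  define c where "c t = a t * b t" for t
  have c1: "(LINT t:{0..}|lborel. c t) = 1"
    using M[rule_format, of 1 1] by (simp add: markov_prod_def c_def a_def b_def)
  have cint: "set_integrable lborel {0..} c"
  proof (rule ccontr)
    assume "\<not> ?thesis"
    then have "(LINT t:{0..}|lborel. c t) = 0"
      by (simp add: set_integrable_def set_lebesgue_integral_def not_integrable_integral_eq)
    then show False using c1 by simp
  qed
  have gml: "g x \<le> g y \<and> g y - g x \<le> y - x" if "0 \<le> x" "x \<le> y" for x y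
    unfolding g_def using that tdf_mono1[OF L] tdf_lip1[OF L] by auto
  have pml: "\<psi> x \<le> \<psi> y \<and> \<psi> y - \<psi> x \<le> y - x" if "0 \<le> x" "x \<le> y" for x y
    unfolding \<psi>_def using that tdf_mono2[OF X] tdf_lip2[OF X] by auto
  have gb: "0 \<le> g x \<and> g x \<le> x \<and> g x \<le> 1" if "0 \<le> x" for x
    unfolding g_def using that tdf_nonneg[OF L] tdf_le1[OF L] tdf_le2[OF L] by auto
  have pb: "0 \<le> \<psi> x \<and> \<psi> x \<le> x \<and> \<psi> x \<le> 1" if "0 \<le> x" for x
    unfolding \<psi>_def using that tdf_nonneg[OF X] tdf_le1[OF X] tdf_le2[OF X] by auto
  have g0: "g 0 = 0" using gb[of 0] by simp
  have p0: "\<psi> 0 = 0" using pb[of 0] by simp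
  have bf: "0 \<le> b t \<and> b t \<le> 1 \<and> (b t \<noteq> 0 \<longrightarrow> (g has_real_derivative b t) (at t))" if "0 < t" for t
  proof -
    have "b t = (if g differentiable (at t) then deriv g t else 0)" by (simp add: b_def pd1_def g_def)
    then show ?thesis using pd_facts[OF gml that] by simp
  qed
  have af: "0 \<le> a t \<and> a t \<le> 1 \<and> (a t \<noteq> 0 \<longrightarrow> (\<psi> has_real_derivative a t) (at t))" if "0 < t" for t
  proof -
    have "a t = (if \<psi> differentiable (at t) then deriv \<psi> t else 0)" by (simp add: a_def pd2_def \<psi>_def)
    then show ?thesis using pd_facts[OF pml that] by simp
  qed
  have cf: "0 \<le> c t \<and> c t \<le> a t \<and> c t \<le> b t" if "0 < t" for t
  proof -
    have A: "0 \<le> a t" "a t \<le> 1" "0 \<le> b t" "b t \<le> 1" using af[OF that] bf[OF that] by auto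
    have "a t * b t \<le> 1 * b t" using A by (intro mult_right_mono) auto
    moreover have "a t * b t \<le> a t * 1" using A by (intro mult_left_mono) auto
    ultimately show ?thesis using A by (simp add: c_def)
  qed
  have gc: "continuous_on {0..} g" by (rule ml_cont[OF gml])
  have pc: "continuous_on {0..} \<psi>" by (rule ml_cont[OF pml])
  have Ip: "(LINT t:{s..T}|lborel. c t) \<le> \<psi> T - \<psi> s" if "0 \<le> s" "s \<le> T" for s T
  proof (rule ftc_ineq[OF pc _ cint that])
    show "\<psi> x \<le> \<psi> y" if "0 \<le> x" "x \<le> y" for x y using pml[OF that] by simp
    fix t assume t: "s < t" "t < T"
    then have t0: "0 < t" using that by linarith
    show "0 \<le> c t \<and> (c t \<noteq> 0 \<longrightarrow> (\<exists>D. (\<psi> has_real_derivative D) (at t) \<and> c t \<le> D))"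
      using cf[OF t0] af[OF t0] by (auto simp: c_def)
  qed
  have Ig: "(LINT t:{s..T}|lborel. c t) \<le> g T - g s" if "0 \<le> s" "s \<le> T" for s T
  proof (rule ftc_ineq[OF gc _ cint that])
    show "g x \<le> g y" if "0 \<le> x" "x \<le> y" for x y using gml[OF that] by simp
    fix t assume t: "s < t" "t < T"
    then have t0: "0 < t" using that by linarith
    show "0 \<le> c t \<and> (c t \<noteq> 0 \<longrightarrow> (\<exists>D. (g has_real_derivative D) (at t) \<and> c t \<le> D))"
      using cf[OF t0] bf[OF t0] by (auto simp: c_def)
  qed
  define I where "I T = (LINT t:{0..T}|lborel. c t)" for T
  have Ilim: "(\<lambda>n. I (real n)) \<longlonglongrightarrow> 1" using int_lim[OF cint] c1 by (simp add: I_def)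
  have evn: "eventually (\<lambda>n. T \<le> real n) sequentially" for T :: real
    unfolding eventually_sequentially by (rule exI[of _ "nat \<lceil>T\<rceil>"]) linarith
  have IT: "I T = \<psi> T" if T: "0 \<le> T" for T
  proof -
    have le: "I T \<le> \<psi> T" using Ip[OF order_refl T] p0 by (simp add: I_def)
    have "eventually (\<lambda>n. I (real n) \<le> I T + 1 - \<psi> T) sequentially"
      using evn[of T]
    proof eventually_elim
      case (elim n)
      have "I (real n) = I T + (LINT t:{T..real n}|lborel. c t)"
        unfolding I_def using split_int[OF cint order_refl T elim] .
      also have "(LINT t:{T..real n}|lborel. c t) \<le> \<psi> (real n) - \<psi> T" using Ip[OF T elim] .
      also have "\<psi> (real n) \<le> 1" using pb[of "real n"] by simp
      finally show ?case by simp
    qed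
    then have "1 \<le> I T + 1 - \<psi> T" using Ilim by (intro LIMSEQ_le_const2[OF Ilim]) (simp add: eventually_sequentially)
    then show ?thesis using le by simp
  qed
  have I1: "I 1 \<le> g 1" using Ig[of 0 1] g0 by (simp add: I_def)
  have g1: "g 1 = 1"
  proof (rule ccontr)
    assume "g 1 \<noteq> 1"
    then have m: "g 1 < 1" using gb[of 1] by simp
    define m where "m = g 1"
    have m1: "m < 1" using m by (simp add: m_def)
    have bk: "b t * (2 - m) \<le> 1" if t: "1 \<le> t" for t
    proof (cases "b t = 0")
      case True then show ?thesis by simp
    next
      case False
      have t0: "0 < t" using t by simp
      have bt: "0 \<le> b t" "b t \<le> 1" "(g has_real_derivative b t) (at t)" using bf[OF t0] False by auto
      have "b t * t \<le> L t 1" using deriv_lower[OF L t0, of "b t"] bt(3) by (simp add: g_def)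
      then have bg: "b t * t \<le> g t" by (simp add: g_def)
      have g1': "g t \<le> 1" "g t \<le> m + (t - 1)" using gb[of t] gml[of 1 t] t by (auto simp: m_def)
      show ?thesis
      proof (cases "2 - m \<le> t")
        case True
        have "b t * (2 - m) \<le> b t * t" using True bt by (intro mult_left_mono) auto
        then show ?thesis using bg g1' by linarith
      next
        case False
        have "b t * (2 - m - t) \<le> 1 * (2 - m - t)" using False bt by (intro mult_right_mono) auto
        then have h1: "b t * 2 - b t * m - b t * t \<le> 2 - m - t" by (simp add: algebra_simps)
        have e: "b t * (2 - m) = b t * 2 - b t * m" by (simp add: algebra_simps)
        show ?thesis unfolding e using h1 bg g1' by linarith
      qed
    qed
    have cint2: "set_integrable lborel {0..} (\<lambda>t. c t * (2 - m))"
      using cint by (intro set_integrable_mult_left) auto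
    have pT: "\<psi> T \<le> \<psi> 1" if T: "1 \<le> T" for T
    proof -
      have "(LINT t:{1..T}|lborel. c t * (2 - m)) \<le> \<psi> T - \<psi> 1"
      proof (rule ftc_ineq[OF pc _ cint2 _ T])
        show "\<psi> x \<le> \<psi> y" if "0 \<le> x" "x \<le> y" for x y using pml[OF that] by simp
        fix t assume t: "1 < t" "t < T"
        then have t0: "0 < t" by linarith
        have ab: "0 \<le> a t" "a t \<le> 1" "a t \<noteq> 0 \<longrightarrow> (\<psi> has_real_derivative a t) (at t)" using af[OF t0] by auto
        have "c t * (2 - m) = a t * (b t * (2 - m))" by (simp add: c_def)
        also have "\<dots> \<le> a t * 1" using ab bk[of t] t by (intro mult_left_mono) auto
        finally have le: "c t * (2 - m) \<le> a t" by simp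
        show "0 \<le> c t * (2 - m) \<and> (c t * (2 - m) \<noteq> 0 \<longrightarrow> (\<exists>D. (\<psi> has_real_derivative D) (at t) \<and> c t * (2 - m) \<le> D))"
          using cf[OF t0] m1 le ab by (auto simp: c_def)
      qed simp
      then have A: "(LINT t:{1..T}|lborel. c t) * (2 - m) \<le> \<psi> T - \<psi> 1" by simp
      have "I T = I 1 + (LINT t:{1..T}|lborel. c t)"
        unfolding I_def by (rule split_int[OF cint order_refl zero_le_one T])
      then have B: "(LINT t:{1..T}|lborel. c t) = \<psi> T - \<psi> 1" using IT[of T] IT[of 1] T by simp
      have C: "\<psi> 1 \<le> \<psi> T" using pml[of 1 T] T by simp
      have "(\<psi> T - \<psi> 1) * (1 - m) \<le> 0" using A B by (simp add: algebra_simps)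
      then show ?thesis using C m1 by (simp add: mult_le_0_iff)
    qed
    have "eventually (\<lambda>n. I (real n) \<le> \<psi> 1) sequentially"
      using evn[of 1] by eventually_elim (use IT pT in auto)
    then have "1 \<le> \<psi> 1" by (intro LIMSEQ_le_const2[OF Ilim]) (simp add: eventually_sequentially)
    then show False using IT[of 1] I1 m by simp
  qed
  have gmin: "g x = min x 1" if x: "0 \<le> x" for x
  proof (cases "x \<le> 1")
    case True
    then show ?thesis using gml[OF x True] gb[OF x] g1 by simp
  next
    case False
    then show ?thesis using gml[of 1 x] gb[OF x] g1 by simp
  qed
  show ?thesis
  proof (intro allI impI)
    fix w1 w2 :: real assume w: "0 \<le> w1" "0 \<le> w2"
    show "L w1 w2 = min w1 w2"
    proof (cases "w2 = 0")
      case True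
      then have "L w1 w2 = 0" using w tdf_nonneg[OF L w] tdf_le2[OF L w] by simp
      then show ?thesis using True w by simp
    next
      case False
      then have w2: "0 < w2" using w by simp
      have "L (w2 * (w1 / w2)) (w2 * 1) = w2 * L (w1 / w2) 1"
        using w w2 by (intro tdf_hom[OF L]) auto
      then have "L w1 w2 = w2 * g (w1 / w2)" using w2 by (simp add: g_def)
      also have "\<dots> = w2 * min (w1 / w2) 1" using gmin w w2 by simp
      also have "\<dots> = min w1 w2" using w2
        by (cases "w1 / w2 \<le> 1") (auto simp: min_def field_simps)
      finally show ?thesis .
    qed
  qed
qed


theorem mainTheorem9:
  fixes L :: "real \<Rightarrow> real \<Rightarrow> real"
  assumes "is_tdf L"
  shows "((\<exists>\<xi>. is_tdf \<xi> \<and> (\<forall>w1 w2. 0 \<le> w1 \<longrightarrow> 0 \<le> w2 \<longrightarrow> markov_prod \<xi> L w1 w2 = min w1 w2))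
            \<longrightarrow> (\<forall>w1 w2. 0 \<le> w1 \<longrightarrow> 0 \<le> w2 \<longrightarrow> L w1 w2 = min w1 w2))
       \<and> ((\<forall>w1>0. AE w2 in lborel. 0 \<le> w2 \<longrightarrow>
              (\<exists>d\<in>{0,1}. ((\<lambda>x. L x w2) has_real_derivative d) (at w1)))
            \<longrightarrow> (\<exists>\<alpha>\<in>{0..1}. \<forall>w1 w2. 0 \<le> w1 \<longrightarrow> 0 \<le> w2 \<longrightarrow> L w1 w2 = min w1 (\<alpha> * w2)))"
proof (intro conjI impI)
  assume "\<exists>\<xi>. is_tdf \<xi> \<and> (\<forall>w1 w2. 0 \<le> w1 \<longrightarrow> 0 \<le> w2 \<longrightarrow> markov_prod \<xi> L w1 w2 = min w1 w2)"
  then obtain \<xi> where X: "is_tdf \<xi>" and M: "\<forall>w1 w2. 0 \<le> w1 \<longrightarrow> 0 \<le> w2 \<longrightarrow> markov_prod \<xi> L w1 w2 = min w1 w2"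
    by blast
  show "\<forall>w1 w2. 0 \<le> w1 \<longrightarrow> 0 \<le> w2 \<longrightarrow> L w1 w2 = min w1 w2"
    by (rule part1[OF assms X M])
next
  assume H: "\<forall>w1>0. AE w2 in lborel. 0 \<le> w2 \<longrightarrow>
              (\<exists>d\<in>{0,1}. ((\<lambda>x. L x w2) has_real_derivative d) (at w1))"
  show "\<exists>\<alpha>\<in>{0..1}. \<forall>w1 w2. 0 \<le> w1 \<longrightarrow> 0 \<le> w2 \<longrightarrow> L w1 w2 = min w1 (\<alpha> * w2)"
    by (rule part2[OF assms H])
qed

end
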